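(* Let $r\in\mathcal R$ be a universal distance matrix and let $q$ be a finite distance matrix of order $N$ such that for some $n<N$, $r_{i,j}=q_{i,j}$ for $i,j=1,\dots,n$. Put $i_k=k$ for $k=1,\dots,n$. Then for every $\epsilon>0$ there exist natural numbers $i_{n+1},\dots,i_N$ such that $\max_{k,s=1,\dots,N}|r_{i_k,i_s}-q_{k,s}|<\epsilon$. Conversely, if an infinite proper distance matrix $r$ has this property for every finite distance matrix $q$ (whose upper-left $n\times n$ corner agrees with that of $r$, for some $n$) and every $\epsilon>0$, then $r$ is universal.
   Context: $\mathcal R$ is the set of infinite real matrices $r=\{r_{i,j}\}_{i,j\ge1}$ with $r_{i,i}=0$, $r_{i,j}\ge0$, $r_{i,j}=r_{j,i}$, $r_{i,k}+r_{k,j}\ge r_{i,j}$; a finite distance matrix of order $N$ is an $N\times N$ matrix with the same properties; $p_n(r)$ is the upper-left $n\times n$ corner. $r$ is proper if $r_{i,j}>0$ for $i\neq j$. For a distance matrix $q$ of order $n$, $A(q)=\{a\in\mathbb R^n:|a_i-a_j|\le q_{i,j}\le a_i+a_j\ \forall i,j\}$. A proper $r\in\mathcal R$ is universal if for every $n$, every $a\in A(p_n(r))$ and every $\epsilon>0$ there is $m\in\mathbb N$ with $\max_{1\le i\le n}|r_{i,m}-a_i|<\epsilon$. *)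

theory Defs
  imports Main Complex_Main
begin

text \<open>Indices are 0-based: the paper's index i corresponds to i-1 here.
  An infinite matrix is a function nat => nat => real; a finite matrix of
  order N is a function whose entries with indices < N are relevant.\<close>

definition dist_matrix_inf :: "(nat \<Rightarrow> nat \<Rightarrow> real) \<Rightarrow> bool" where
  "dist_matrix_inf r \<longleftrightarrow>
     (\<forall>i. r i i = 0) \<and> (\<forall>i j. r i j \<ge> 0) \<and> (\<forall>i j. r i j = r j i) \<and>
     (\<forall>i j k. r i k + r k j \<ge> r i j)"

definition dist_matrix_fin :: "nat \<Rightarrow> (nat \<Rightarrow> nat \<Rightarrow> real) \<Rightarrow> bool" where
  "dist_matrix_fin N q \<longleftrightarrow>
     (\<forall>i<N. q i i = 0) \<and> (\<forall>i<N. \<forall>j<N. q i j \<ge> 0) \<and>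
     (\<forall>i<N. \<forall>j<N. q i j = q j i) \<and>
     (\<forall>i<N. \<forall>j<N. \<forall>k<N. q i k + q k j \<ge> q i j)"

definition proper_matrix :: "(nat \<Rightarrow> nat \<Rightarrow> real) \<Rightarrow> bool" where
  "proper_matrix r \<longleftrightarrow> (\<forall>i j. i \<noteq> j \<longrightarrow> r i j > 0)"

text \<open>A(q) for a distance matrix q of order n; vectors are nat => real, only
  the first n entries matter.\<close>
definition A_set :: "nat \<Rightarrow> (nat \<Rightarrow> nat \<Rightarrow> real) \<Rightarrow> (nat \<Rightarrow> real) set" where
  "A_set n q = {a. \<forall>i<n. \<forall>j<n. \<bar>a i - a j\<bar> \<le> q i j \<and> q i j \<le> a i + a j}"

text \<open>p_n(r) is the upper-left n x n corner, i.e. r restricted to indices < n.\<close>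
definition universal :: "(nat \<Rightarrow> nat \<Rightarrow> real) \<Rightarrow> bool" where
  "universal r \<longleftrightarrow> dist_matrix_inf r \<and> proper_matrix r \<and>
     (\<forall>n. \<forall>a \<in> A_set n r. \<forall>\<epsilon>>0. \<exists>m. \<forall>i<n. \<bar>r i m - a i\<bar> < \<epsilon>)"

definition extension_property :: "(nat \<Rightarrow> nat \<Rightarrow> real) \<Rightarrow> bool" where
  "extension_property r \<longleftrightarrow>
     (\<forall>N q n. dist_matrix_fin N q \<and> n < N \<and> (\<forall>i<n. \<forall>j<n. r i j = q i j) \<longrightarrow>
        (\<forall>\<epsilon>>0. \<exists>idx :: nat \<Rightarrow> nat. (\<forall>k<n. idx k = k) \<and>
            (\<forall>k<N. \<forall>s<N. \<bar>r (idx k) (idx s) - q k s\<bar> < \<epsilon>)))"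

end

theory Submission
  imports Defs
begin

lemma step_lemma:
  fixes r q :: "nat \<Rightarrow> nat \<Rightarrow> real" and x :: "nat \<Rightarrow> nat"
  assumes R: "dist_matrix_inf r"
    and U: "\<forall>n. \<forall>a \<in> A_set n r. \<forall>\<epsilon>>0. \<exists>m. \<forall>i<n. \<bar>r i m - a i\<bar> < \<epsilon>"
    and Q: "dist_matrix_fin N q" and MN: "M < N" and M0: "0 < M" and d: "\<delta> > 0"
    and err: "\<forall>k<M. \<forall>s<M. \<bar>r (x k) (x s) - q k s\<bar> < \<delta>"
  shows "\<exists>m. \<forall>k<M. \<bar>r (x k) m - q k M\<bar> < 2*\<delta>"
proof -
  have rsym: "\<And>i j. r i j = r j i" and rtri: "\<And>i j k. r i k + r k j \<ge> r i j"
    and r0: "\<And>i. r i i = 0"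
    using R unfolding dist_matrix_inf_def by auto
  have qsym: "\<And>i j. i<N \<Longrightarrow> j<N \<Longrightarrow> q i j = q j i"
    and qtri: "\<And>i j k. i<N \<Longrightarrow> j<N \<Longrightarrow> k<N \<Longrightarrow> q i k + q k j \<ge> q i j"
    using Q unfolding dist_matrix_fin_def by auto
  define f where "f p = Min ((\<lambda>s. q s M + r (x s) p) ` {..<M})" for p
  define A where "A p = \<delta> + f p" for p
  have fin: "finite ((\<lambda>s. q s M + r (x s) p) ` {..<M})" for p by simp
  have ne: "(\<lambda>s. q s M + r (x s) p) ` {..<M} \<noteq> {}" for p using M0 by auto
  have fle: "f p \<le> q s M + r (x s) p" if "s < M" for s p
    unfolding f_def using that by (intro Min_le) auto
  have fat: "\<exists>s<M. f p = q s M + r (x s) p" for p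
  proof -
    have "f p \<in> (\<lambda>s. q s M + r (x s) p) ` {..<M}"
      unfolding f_def using Min_in[OF fin ne] by blast
    then show ?thesis by auto
  qed
  have lip: "f p \<le> f p' + r p p'" for p p'
  proof -
    obtain s where s: "s < M" "f p' = q s M + r (x s) p'" using fat by blast
    have "f p \<le> q s M + r (x s) p" using fle[OF s(1)] .
    also have "\<dots> \<le> q s M + r (x s) p' + r p' p" using rtri[of "x s" p p'] by simp
    finally show ?thesis using s(2) rsym[of p' p] by simp
  qed
  have sumge: "r p p' \<le> A p + A p'" for p p'
  proof -
    obtain s where s: "s < M" "f p = q s M + r (x s) p" using fat by blast
    obtain t where t: "t < M" "f p' = q t M + r (x t) p'" using fat by blast
    have "q s t \<le> q s M + q M t" using qtri[of s t M] s t MN by simp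
    moreover have "q M t = q t M" using qsym[of M t] t MN by simp
    moreover have "r (x s) (x t) - q s t < \<delta>" using err s t by fastforce
    moreover have "r p p' \<le> r p (x s) + r (x s) p'" using rtri .
    moreover have "r (x s) p' \<le> r (x s) (x t) + r (x t) p'" using rtri .
    moreover have "r p (x s) = r (x s) p" using rsym .
    ultimately show ?thesis unfolding A_def using s t d by linarith
  qed
  have "A \<in> A_set (Suc (sum x {..<M})) r"
    unfolding A_set_def A_def
    using lip sumge[unfolded A_def] rsym by (auto simp: abs_le_iff) (smt (verit) lip rsym)+
  then obtain m where m: "\<forall>i<Suc (sum x {..<M}). \<bar>r i m - A i\<bar> < \<delta>"
    using U d by blast
  show ?thesis
  proof (intro exI allI impI)
    fix k assume k: "k < M"
    have xk: "x k < Suc (sum x {..<M})"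
      using member_le_sum[of k "{..<M}" x] k by simp
    have up: "A (x k) \<le> \<delta> + q k M" using fle[OF k, of "x k"] r0 unfolding A_def by simp
    obtain s where s: "s < M" "f (x k) = q s M + r (x s) (x k)" using fat by blast
    have "q k M \<le> q k s + q s M" using qtri[of k M s] s k MN by simp
    moreover have "q k s = q s k" using qsym[of k s] s k MN by simp
    moreover have "q s k - r (x s) (x k) < \<delta>" using err s k by fastforce
    ultimately have lo: "A (x k) \<ge> q k M" unfolding A_def using s by linarith
    show "\<bar>r (x k) m - q k M\<bar> < 2 * \<delta>" using m xk up lo by fastforce
  qed
qed

lemma forward_aux:
  fixes r q :: "nat \<Rightarrow> nat \<Rightarrow> real"
  assumes Uv: "universal r" and Q: "dist_matrix_fin N q" and nN: "n < N"
    and ag: "\<forall>i<n. \<forall>j<n. r i j = q i j"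
  shows "M \<le> N \<Longrightarrow> max n 1 \<le> M \<Longrightarrow> \<forall>\<epsilon>>0. \<exists>idx. (\<forall>k<n. idx k = k) \<and>
           (\<forall>k<M. \<forall>s<M. \<bar>r (idx k) (idx s) - q k s\<bar> < \<epsilon>)"
proof (induction M)
  case 0
  then show ?case by simp
next
  case (Suc M)
  have R: "dist_matrix_inf r" and U: "\<forall>n. \<forall>a \<in> A_set n r. \<forall>\<epsilon>>0. \<exists>m. \<forall>i<n. \<bar>r i m - a i\<bar> < \<epsilon>"
    using Uv unfolding universal_def by auto
  show ?case
  proof (cases "Suc M = max n 1")
    case True
    have "r k s = q k s" if "k < Suc M" "s < Suc M" for k s
    proof (cases "n = 0")
      case True
      then have "k = 0" "s = 0" using that \<open>Suc M = max n 1\<close> by auto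
      then show ?thesis using R Q nN True unfolding dist_matrix_inf_def dist_matrix_fin_def by auto
    next
      case False
      then show ?thesis using ag that \<open>Suc M = max n 1\<close> by auto
    qed
    then show ?thesis by (intro allI impI exI[of _ id]) auto
  next
    case False
    with Suc.prems have le: "M \<le> N" "max n 1 \<le> M" by auto
    show ?thesis
    proof (intro allI impI)
      fix \<epsilon> :: real assume e: "\<epsilon> > 0"
      obtain x where x: "\<forall>k<n. x k = k" "\<forall>k<M. \<forall>s<M. \<bar>r (x k) (x s) - q k s\<bar> < \<epsilon>/2"
        using Suc.IH[OF le] e by (meson half_gt_zero)
      obtain m where m: "\<forall>k<M. \<bar>r (x k) m - q k M\<bar> < 2*(\<epsilon>/2)"
        using step_lemma[OF R U Q _ _ _ x(2)] Suc.prems le e by fastforce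
      define idx where "idx = x(M := m)"
      have i1: "\<forall>k<n. idx k = k" using x(1) le unfolding idx_def by auto
      have rsym: "\<And>i j. r i j = r j i" and r0: "\<And>i. r i i = 0"
        using R unfolding dist_matrix_inf_def by auto
      have qsym: "\<And>i j. i<N \<Longrightarrow> j<N \<Longrightarrow> q i j = q j i" and q0: "\<And>i. i<N \<Longrightarrow> q i i = 0"
        using Q unfolding dist_matrix_fin_def by auto
      have "\<bar>r (idx k) (idx s) - q k s\<bar> < \<epsilon>" if ks: "k < Suc M" "s < Suc M" for k s
      proof -
        consider "k < M" "s < M" | "k < M" "s = M" | "k = M" "s < M" | "k = M" "s = M"
          using ks by (auto simp: less_Suc_eq)
        then show ?thesis
        proof cases
          case 1 then show ?thesis using x(2) e unfolding idx_def by fastforce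
        next
          case 2 then show ?thesis using m e unfolding idx_def by fastforce
        next
          case 3 then show ?thesis using m e rsym[of m "x s"] qsym[of M s] Suc.prems
            unfolding idx_def by fastforce
        next
          case 4 then show ?thesis using r0 q0 e Suc.prems unfolding idx_def by simp
        qed
      qed
      then show "\<exists>idx. (\<forall>k<n. idx k = k) \<and> (\<forall>k<Suc M. \<forall>s<Suc M. \<bar>r (idx k) (idx s) - q k s\<bar> < \<epsilon>)"
        using i1 by blast
    qed
  qed
qed

lemma backward_aux:
  fixes r :: "nat \<Rightarrow> nat \<Rightarrow> real"
  assumes R: "dist_matrix_inf r" and E: "extension_property r"
    and a: "a \<in> A_set n r" and e: "\<epsilon> > 0"
  shows "\<exists>m. \<forall>i<n. \<bar>r i m - a i\<bar> < \<epsilon>"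
proof -
  have rsym: "\<And>i j. r i j = r j i" and rtri: "\<And>i j k. r i k + r k j \<ge> r i j"
    and r0: "\<And>i. r i i = 0" and rpos: "\<And>i j. r i j \<ge> 0"
    using R unfolding dist_matrix_inf_def by auto
  have aa: "\<And>i j. i<n \<Longrightarrow> j<n \<Longrightarrow> \<bar>a i - a j\<bar> \<le> r i j \<and> r i j \<le> a i + a j"
    using a unfolding A_set_def by auto
  have apos: "\<And>i. i<n \<Longrightarrow> a i \<ge> 0" using aa r0 by fastforce
  define q where "q i j = (if i < n \<and> j < n then r i j else if i = n \<and> j < n then a j
     else if j = n \<and> i < n then a i else 0)" for i j
  have Q: "dist_matrix_fin (Suc n) q"
    unfolding dist_matrix_fin_def
  proof (intro conjI allI impI)
    fix i assume "i < Suc n" then show "q i i = 0" unfolding q_def using r0 by auto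
  next
    fix i j assume "i < Suc n" "j < Suc n" then show "q i j \<ge> 0" unfolding q_def using rpos apos by auto
  next
    fix i j assume "i < Suc n" "j < Suc n" then show "q i j = q j i" unfolding q_def using rsym by auto
  next
    fix i j k assume ijk: "i < Suc n" "j < Suc n" "k < Suc n"
    show "q i k + q k j \<ge> q i j"
    proof -
      have c: "(i < n \<or> i = n) \<and> (j < n \<or> j = n) \<and> (k < n \<or> k = n)" using ijk by auto
      have t1: "r i j \<le> r i k + r k j" using rtri .
      show ?thesis
        using c
      proof (elim conjE disjE)
        assume "i < n" "j < n" "k < n" then show ?thesis using t1 unfolding q_def by simp
      next
        assume "i < n" "j < n" "k = n" then show ?thesis using aa[of i j] unfolding q_def by simp
      next
        assume "i < n" "j = n" "k < n" then show ?thesis using aa[of i k] unfolding q_def by (simp add: abs_le_iff)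
      next
        assume "i < n" "j = n" "k = n" then show ?thesis unfolding q_def by simp
      next
        assume "i = n" "j < n" "k < n" then show ?thesis using aa[of k j] unfolding q_def by (simp add: abs_le_iff)
      next
        assume "i = n" "j < n" "k = n" then show ?thesis unfolding q_def by simp
      next
        assume "i = n" "j = n" "k < n" then show ?thesis using apos[of k] unfolding q_def by simp
      next
        assume "i = n" "j = n" "k = n" then show ?thesis unfolding q_def by simp
      qed
    qed
  qed
  have ag: "\<forall>i<n. \<forall>j<n. r i j = q i j" unfolding q_def by auto
  obtain idx where idx: "\<forall>k<n. idx k = k" "\<forall>k<Suc n. \<forall>s<Suc n. \<bar>r (idx k) (idx s) - q k s\<bar> < \<epsilon>"
    using E Q ag e unfolding extension_property_def by blast
  show ?thesis
  proof (intro exI allI impI)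
    fix i assume i: "i < n"
    have "\<bar>r (idx i) (idx n) - q i n\<bar> < \<epsilon>" using idx(2) i by auto
    then show "\<bar>r i (idx n) - a i\<bar> < \<epsilon>" using idx(1) i unfolding q_def by auto
  qed
qed

theorem corollary2:
  fixes r :: "nat \<Rightarrow> nat \<Rightarrow> real"
  shows "(universal r \<longrightarrow> extension_property r) \<and>
         (dist_matrix_inf r \<and> proper_matrix r \<and> extension_property r \<longrightarrow> universal r)"
proof (intro conjI impI)
  assume U: "universal r"
  show "extension_property r"
    unfolding extension_property_def
  proof (rule allI, rule allI, rule allI, rule impI)
    fix N q n assume h: "dist_matrix_fin N q \<and> n < N \<and> (\<forall>i<n. \<forall>j<n. r i j = q i j)"
    show "\<forall>\<epsilon>>0. \<exists>idx. (\<forall>k<n. idx k = k) \<and> (\<forall>k<N. \<forall>s<N. \<bar>r (idx k) (idx s) - q k s\<bar> < \<epsilon>)"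
    proof -
      have h1: "dist_matrix_fin N q" "n < N" "\<forall>i<n. \<forall>j<n. r i j = q i j" using h by auto
      have "max n 1 \<le> N" using h1(2) by simp
      then show ?thesis using forward_aux[OF U h1 order_refl] by blast
    qed
  qed
next
  assume h: "dist_matrix_inf r \<and> proper_matrix r \<and> extension_property r"
  have "\<forall>n. \<forall>a \<in> A_set n r. \<forall>\<epsilon>>0. \<exists>m. \<forall>i<n. \<bar>r i m - a i\<bar> < \<epsilon>"
  proof (intro allI ballI impI)
    fix n a and \<epsilon> :: real assume "a \<in> A_set n r" "\<epsilon> > 0"
    then show "\<exists>m. \<forall>i<n. \<bar>r i m - a i\<bar> < \<epsilon>" using backward_aux[of r a n \<epsilon>] h by simp
  qed
  then show "universal r" unfolding universal_def using h by simp
qed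

end
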